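(* Let $n\geq 3$ and let $G$ be a connected graph with $|V(G)|<n$. Then $\mathrm{ldim}_f(G\square K_n)=\frac{n}{2}$.
   Context: All graphs are finite, simple and connected; $d$ is the shortest-path distance; $K_n$ is the complete graph on $n$ vertices. For an edge $uv$ of a graph $X$, $L_X(uv)=\{x\in V(X): d_X(u,x)\neq d_X(v,x)\}$. A function $f:V(X)\to[0,1]$ is a local resolving function of $X$ if $\sum_{x\in L_X(uv)}f(x)\geq 1$ for every edge $uv$; $\mathrm{ldim}_f(X)$ is the minimum of $\sum_{v}f(v)$ over all local resolving functions. The Cartesian product $G\square H$ has vertex set $V(G)\times V(H)$, with $(u_1,v_1)$ adjacent to $(u_2,v_2)$ iff ($u_1u_2\in E(G)$ and $v_1=v_2$) or ($u_1=u_2$ and $v_1v_2\in E(H)$). *)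

theory Defs
  imports Main "HOL-Library.Product_Plus" Complex_Main
begin

type_synonym 'a graph = "'a set \<times> ('a \<Rightarrow> 'a \<Rightarrow> bool)"

definition verts :: "'a graph \<Rightarrow> 'a set" where "verts X = fst X"
definition adj :: "'a graph \<Rightarrow> 'a \<Rightarrow> 'a \<Rightarrow> bool" where
  "adj X u v = (u \<in> verts X \<and> v \<in> verts X \<and> snd X u v)"

definition simple_graph :: "'a graph \<Rightarrow> bool" where
  "simple_graph X \<longleftrightarrow> finite (verts X) \<and> verts X \<noteq> {} \<and>
     (\<forall>u v. snd X u v \<longrightarrow> u \<in> verts X \<and> v \<in> verts X) \<and>
     (\<forall>u v. snd X u v \<longrightarrow> snd X v u) \<and> (\<forall>u. \<not> snd X u u)"

definition connected_graph :: "'a graph \<Rightarrow> bool" where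
  "connected_graph X \<longleftrightarrow> simple_graph X \<and>
     (\<forall>u\<in>verts X. \<forall>v\<in>verts X. (adj X)\<^sup>*\<^sup>* u v)"

definition gdist :: "'a graph \<Rightarrow> 'a \<Rightarrow> 'a \<Rightarrow> nat" where
  "gdist X u v = (LEAST k. (adj X ^^ k) u v)"

definition complete_graph :: "nat \<Rightarrow> nat graph" where
  "complete_graph n = ({0..<n}, \<lambda>x y. x \<in> {0..<n} \<and> y \<in> {0..<n} \<and> x \<noteq> y)"

definition cart_prod :: "'a graph \<Rightarrow> 'b graph \<Rightarrow> ('a \<times> 'b) graph" where
  "cart_prod G H = (verts G \<times> verts H,
     \<lambda>(u1, v1) (u2, v2). (adj G u1 u2 \<and> v1 = v2 \<and> v1 \<in> verts H) \<or>
                         (u1 = u2 \<and> u1 \<in> verts G \<and> adj H v1 v2))"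

definition resolving_set_edge :: "'a graph \<Rightarrow> 'a \<Rightarrow> 'a \<Rightarrow> 'a set" where
  "resolving_set_edge X u v = {x \<in> verts X. gdist X u x \<noteq> gdist X v x}"

definition local_resolving_function :: "'a graph \<Rightarrow> ('a \<Rightarrow> real) \<Rightarrow> bool" where
  "local_resolving_function X f \<longleftrightarrow>
     (\<forall>x\<in>verts X. 0 \<le> f x \<and> f x \<le> 1) \<and>
     (\<forall>u v. adj X u v \<longrightarrow> (\<Sum>x\<in>resolving_set_edge X u v. f x) \<ge> 1)"

definition ldim_f :: "'a graph \<Rightarrow> real" where
  "ldim_f X = Inf {(\<Sum>v\<in>verts X. f v) | f. local_resolving_function X f}"

end

theory Submission
  imports Defs
begin

lemma verts_K: "verts (complete_graph n) = {0..<n}"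
  by (simp add: verts_def complete_graph_def)

lemma adj_K: "adj (complete_graph n) i j \<longleftrightarrow> i < n \<and> j < n \<and> i \<noteq> j"
  by (auto simp: adj_def verts_def complete_graph_def)

lemma verts_P: "verts (cart_prod G H) = verts G \<times> verts H"
  by (simp add: verts_def cart_prod_def)

lemma adj_P: "adj (cart_prod G H) (g,i) (h,k) \<longleftrightarrow>
   ((adj G g h \<and> i = k \<and> i \<in> verts H) \<or> (g = h \<and> g \<in> verts G \<and> adj H i k))"
proof -
  have s: "snd (cart_prod G H) = (\<lambda>(u1, v1) (u2, v2). (adj G u1 u2 \<and> v1 = v2 \<and> v1 \<in> verts H) \<or>
                         (u1 = u2 \<and> u1 \<in> verts G \<and> adj H v1 v2))"
    by (simp add: cart_prod_def)
  show ?thesis unfolding adj_def[of "cart_prod G H"] verts_P s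
    by (auto simp: adj_def)
qed

lemma gdist_walk: "(adj X)\<^sup>*\<^sup>* u v \<Longrightarrow> (adj X ^^ gdist X u v) u v"
  unfolding gdist_def rtranclp_power by (rule LeastI_ex)

lemma gdist_le: "(adj X ^^ k) u v \<Longrightarrow> gdist X u v \<le> k"
  unfolding gdist_def by (rule Least_le)

lemma lift_walk: "(adj G ^^ m) g h \<Longrightarrow> k \<in> verts H \<Longrightarrow> (adj (cart_prod G H) ^^ m) (g,k) (h,k)"
proof (induction m arbitrary: h)
  case 0 then show ?case by simp
next
  case (Suc m)
  from Suc.prems(1) obtain y where "(adj G ^^ m) g y" "adj G y h" by (rule relpowp_Suc_E)
  have "(adj (cart_prod G H) ^^ m) (g,k) (y,k)" using Suc.IH[OF \<open>(adj G ^^ m) g y\<close> Suc.prems(2)] .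
  moreover have "adj (cart_prod G H) (y,k) (h,k)" using Suc.prems(2) \<open>adj G y h\<close> by (simp add: adj_P)
  ultimately show ?case by (rule relpowp_Suc_I)
qed

lemma proj_walk: "(adj (cart_prod G H) ^^ m) x y \<Longrightarrow>
   \<exists>m'. (adj G ^^ m') (fst x) (fst y) \<and> m' + (if snd x = snd y then 0 else 1) \<le> m"
proof (induction m arbitrary: y)
  case 0 then show ?case by (auto intro: exI[of _ 0])
next
  case (Suc m)
  from Suc.prems obtain z where z: "(adj (cart_prod G H) ^^ m) x z" "adj (cart_prod G H) z y"
    by (rule relpowp_Suc_E)
  from Suc.IH[OF z(1)] obtain m' where m': "(adj G ^^ m') (fst x) (fst z)"
    "m' + (if snd x = snd z then 0 else 1) \<le> m" by blast
  obtain z1 z2 y1 y2 where zy: "z = (z1,z2)" "y = (y1,y2)" by fastforce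
  from z(2) have "(adj G z1 y1 \<and> z2 = y2) \<or> (z1 = y1)"
    unfolding zy adj_P by (auto simp: adj_def)
  then show ?case
  proof
    assume a: "adj G z1 y1 \<and> z2 = y2"
    have "(adj G ^^ Suc m') (fst x) (fst y)" using relpowp_Suc_I[OF m'(1), of y1] a zy by simp
    then show ?thesis using m'(2) a zy by (intro exI[of _ "Suc m'"]) auto
  next
    assume a: "z1 = y1"
    then show ?thesis using m' zy by (intro exI[of _ m']) auto
  qed
qed

lemma gdist_G_walk:
  assumes "connected_graph G" "g \<in> verts G" "h \<in> verts G"
  shows "(adj G ^^ gdist G g h) g h"
  using assms by (auto simp: connected_graph_def intro: gdist_walk)

lemma gdist_zero:
  assumes "connected_graph G" "g \<in> verts G" "h \<in> verts G"
  shows "gdist G g h = 0 \<longleftrightarrow> g = h"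
proof
  assume "gdist G g h = 0"
  with gdist_G_walk[OF assms] show "g = h" by simp
next
  assume "g = h"
  then have "gdist G g h \<le> 0" using gdist_le[OF relpowp_0_I[of "adj G" g]] by simp
  then show "gdist G g h = 0" by simp
qed

lemma dist_P:
  assumes G: "connected_graph G" and g: "g \<in> verts G" and h: "h \<in> verts G"
    and i: "i < n" and k: "k < n"
  shows "gdist (cart_prod G (complete_graph n)) (g,i) (h,k) = gdist G g h + (if i = k then 0 else 1)"
proof (rule antisym)
  let ?P = "cart_prod G (complete_graph n)"
  have w: "(adj ?P ^^ gdist G g h) (g,k) (h,k)"
    by (rule lift_walk[OF gdist_G_walk[OF G g h]]) (simp add: verts_K k)
  show "gdist ?P (g,i) (h,k) \<le> gdist G g h + (if i = k then 0 else 1)"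
  proof (cases "i = k")
    case True then show ?thesis using gdist_le[OF w] by simp
  next
    case False
    have "adj ?P (g,i) (g,k)" using False g i k by (simp add: adj_P adj_K)
    from relpowp_Suc_I2[OF this w] False show ?thesis using gdist_le by fastforce
  qed
next
  let ?P = "cart_prod G (complete_graph n)"
  have "(adj ?P ^^ gdist G g h) (g,k) (h,k)"
    by (rule lift_walk[OF gdist_G_walk[OF G g h]]) (simp add: verts_K k)
  have ex: "(adj ?P)\<^sup>*\<^sup>* (g,i) (h,k)"
  proof (cases "i = k")
    case True then show ?thesis using \<open>(adj ?P ^^ gdist G g h) (g,k) (h,k)\<close>
      by (auto intro: relpowp_imp_rtranclp)
  next
    case False
    have "adj ?P (g,i) (g,k)" using False g i k by (simp add: adj_P adj_K)
    from relpowp_Suc_I2[OF this \<open>(adj ?P ^^ gdist G g h) (g,k) (h,k)\<close>]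
    show ?thesis by (rule relpowp_imp_rtranclp)
  qed
  from proj_walk[OF gdist_walk[OF ex]] obtain m' where
    "(adj G ^^ m') g h" "m' + (if i = k then 0 else 1) \<le> gdist ?P (g,i) (h,k)" by auto
  with gdist_le[of m' G g h] show "gdist G g h + (if i = k then 0 else 1) \<le> gdist ?P (g,i) (h,k)"
    by linarith
qed

lemma R1:
  assumes G: "connected_graph G" and g: "g \<in> verts G" and i: "i < n" and j: "j < n" and ij: "i \<noteq> j"
  shows "resolving_set_edge (cart_prod G (complete_graph n)) (g,i) (g,j) = verts G \<times> {i,j}"
  using i j ij g unfolding resolving_set_edge_def verts_P verts_K
  by (auto simp: dist_P[OF G] split: if_splits)

lemma R2:
  assumes G: "connected_graph G" and a: "adj G g g'" and i: "i < n"
  shows "{g,g'} \<times> {0..<n} \<subseteq> resolving_set_edge (cart_prod G (complete_graph n)) (g,i) (g',i)"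
proof -
  have gg: "g \<in> verts G" "g' \<in> verts G" "g \<noteq> g'" using a G
    by (auto simp: adj_def connected_graph_def simple_graph_def)
  have dd: "gdist G g g = 0" "gdist G g' g' = 0" "gdist G g' g \<noteq> 0" "gdist G g g' \<noteq> 0"
    using gg by (auto simp: gdist_zero[OF G])
  show ?thesis
    unfolding resolving_set_edge_def verts_P verts_K using gg i dd
    by (auto simp: dist_P[OF G])
qed

theorem theorem3p13:
  fixes G :: "'a graph" and n :: nat
  assumes "n \<ge> 3" and "connected_graph G" and "card (verts G) < n"
  shows "ldim_f (cart_prod G (complete_graph n)) = real n / 2"
proof -
  let ?P = "cart_prod G (complete_graph n)"
  let ?V = "verts G"
  have G: "connected_graph G" by fact
  have finV: "finite ?V" and neV: "?V \<noteq> {}" using G by (auto simp: connected_graph_def simple_graph_def)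
  have cV: "card ?V > 0" using finV neV by (simp add: card_gt_0_iff)
  have vP: "verts ?P = ?V \<times> {0..<n}" by (simp add: verts_P verts_K)
  define c0 :: real where "c0 = 1 / (2 * real (card ?V))"
  have c0pos: "c0 > 0" using cV by (simp add: c0_def)
  have mem: "real n / 2 \<in> {(\<Sum>v\<in>verts ?P. f v) | f. local_resolving_function ?P f}"
  proof -
    have lrf: "local_resolving_function ?P (\<lambda>_. c0)"
      unfolding local_resolving_function_def
    proof (intro conjI allI impI ballI)
      fix x show "0 \<le> c0" using c0pos by simp
      show "c0 \<le> 1" using cV by (simp add: c0_def)
    next
      fix u v assume uv: "adj ?P u v"
      obtain g i h k where u: "u = (g,i)" and v: "v = (h,k)" by fastforce
      have fin: "finite (resolving_set_edge ?P u v)"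
        by (rule finite_subset[of _ "verts ?P"]) (auto simp: resolving_set_edge_def vP finV)
      from uv have "(adj G g h \<and> i = k \<and> i < n) \<or> (g = h \<and> g \<in> ?V \<and> i < n \<and> k < n \<and> i \<noteq> k)"
        unfolding u v adj_P by (auto simp: adj_K verts_K)
      then show "1 \<le> (\<Sum>x\<in>resolving_set_edge ?P u v. c0)"
      proof
        assume a: "adj G g h \<and> i = k \<and> i < n"
        have gh: "g \<noteq> h" using a G by (auto simp: adj_def connected_graph_def simple_graph_def)
        have sub: "{g,h} \<times> {0..<n} \<subseteq> resolving_set_edge ?P u v"
          using R2[OF G, of g h i] a u v by simp
        have "card ({g,h} \<times> {0..<n}) = 2 * n" proof -
          have "card {g,h} = 2" using gh by simp
          then show ?thesis by (simp add: card_cartesian_product)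
        qed
        have "(\<Sum>x\<in>{g,h} \<times> {0..<n}. c0) = real (card ({g,h} \<times> {0..<n})) * c0" by simp
        also have "\<dots> = 2 * real n * c0" by (simp only: \<open>card ({g,h} \<times> {0..<n}) = 2 * n\<close> of_nat_mult of_nat_numeral)
        finally have eq: "(\<Sum>x\<in>{g,h} \<times> {0..<n}. c0) = 2 * real n * c0" .
        have "2 * real n * c0 = (\<Sum>x\<in>{g,h} \<times> {0..<n}. c0)" using eq by simp
        also have "\<dots> \<le> (\<Sum>x\<in>resolving_set_edge ?P u v. c0)"
          by (rule sum_mono2[OF fin sub]) (use c0pos in simp)
        finally have "2 * real n * c0 \<le> (\<Sum>x\<in>resolving_set_edge ?P u v. c0)" .
        moreover have "1 \<le> 2 * real n * c0" using assms(3) cV by (simp add: c0_def field_simps)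
        ultimately show ?thesis by linarith
      next
        assume a: "g = h \<and> g \<in> ?V \<and> i < n \<and> k < n \<and> i \<noteq> k"
        have "resolving_set_edge ?P u v = ?V \<times> {i,k}" using R1[OF G, of g i n k] a u v by auto
        moreover have "card (?V \<times> {i,k}) = 2 * card ?V" using a by (simp add: card_cartesian_product)
        ultimately show ?thesis using cV by (simp add: c0_def)
      qed
    qed
    have "(\<Sum>v\<in>verts ?P. c0) = real n / 2" using cV
      by (simp add: vP card_cartesian_product c0_def)
    then have "real n / 2 = (\<Sum>v\<in>verts ?P. c0)" by simp
    then show ?thesis using lrf by blast
  qed
  have low: "real n / 2 \<le> (\<Sum>v\<in>verts ?P. f v)" if lrf: "local_resolving_function ?P f" for f
  proof -
    define c where "c k = (\<Sum>h\<in>?V. f (h,k))" for k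
    have sumB: "(\<Sum>x\<in>?V \<times> B. f x) = (\<Sum>k\<in>B. c k)" if "finite B" for B
    proof -
      have "(\<Sum>x\<in>?V \<times> B. f x) = (\<Sum>h\<in>?V. \<Sum>k\<in>B. f (h,k))"
        by (subst sum.cartesian_product) simp
      also have "\<dots> = (\<Sum>k\<in>B. c k)" unfolding c_def by (rule sum.swap)
      finally show ?thesis .
    qed
    obtain g0 where g0: "g0 \<in> ?V" using neV by blast
    have pair: "c i + c j \<ge> 1" if "i < n" "j < n" "i \<noteq> j" for i j
    proof -
      have "adj ?P (g0,i) (g0,j)" using that g0 by (simp add: adj_P adj_K)
      with lrf have "1 \<le> (\<Sum>x\<in>resolving_set_edge ?P (g0,i) (g0,j). f x)"
        unfolding local_resolving_function_def by blast
      also have "\<dots> = (\<Sum>k\<in>{i,j}. c k)" using R1[OF G g0 that] sumB[of "{i,j}"] by simp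
      also have "\<dots> = c i + c j" using that by simp
      finally show ?thesis .
    qed
    define S where "S = (\<Sum>k\<in>{0..<n}. c k)"
    have tot: "(\<Sum>v\<in>verts ?P. f v) = S" unfolding vP S_def by (rule sumB) simp
    have rowi: "real n - 1 \<le> (real n - 2) * c i + S" if i: "i < n" for i
    proof -
      let ?A = "{0..<n} - {i}"
      have cA: "card ?A = n - 1" using i by simp
      have "real (card ?A) \<le> (\<Sum>j\<in>?A. c i + c j)"
        using sum_mono[of ?A "\<lambda>_. 1::real" "\<lambda>j. c i + c j"] pair i by auto
      also have "\<dots> = real (card ?A) * c i + (S - c i)"
        using i by (simp add: sum.distrib S_def sum_diff1)
      finally show ?thesis using cA i by (simp add: of_nat_diff algebra_simps)
    qed
    have "(\<Sum>i\<in>{0..<n}. real n - 1) \<le> (\<Sum>i\<in>{0..<n}. (real n - 2) * c i + S)"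
      by (rule sum_mono) (simp add: rowi)
    then have "real n * (real n - 1) \<le> (real n - 2) * S + real n * S"
      by (simp add: sum.distrib sum_distrib_left[symmetric] S_def)
    then have "real n * (real n - 1) \<le> 2 * (real n - 1) * S" by (simp add: algebra_simps)
    moreover have "real n - 1 > 0" using assms(1) by simp
    ultimately have "real n \<le> 2 * S"
      by (metis mult.commute mult.left_commute mult_le_cancel_left_pos)
    then show ?thesis using tot by simp
  qed
  show ?thesis unfolding ldim_f_def
  proof (rule cInf_eq_minimum[OF mem])
    fix x assume "x \<in> {(\<Sum>v\<in>verts ?P. f v) | f. local_resolving_function ?P f}"
    then obtain f where "x = (\<Sum>v\<in>verts ?P. f v)" "local_resolving_function ?P f" by blast
    then show "real n / 2 \<le> x" using low by blast
  qed
qed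

end
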